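(* Let $b\ge 2$ with $b\not\equiv 1\pmod 3$, and let $n\ge 2$. Then $$g(T_{b'}(n)) = 3b + \frac{b^{2n}(b^3+b^2-b-1) + b^{n}\{b^2(n+1)-(n+3)\}}{2}.$$
   Context: For integers $b\ge2$ with $b\not\equiv1\pmod3$, $n\ge0$, $i\ge0$ put $s'_i=(b+1)b^{n+i}+1$, and $T_{b'}(n)=\langle\{s'_i:i\in\mathbb{N}\}\rangle$ (submonoid of $(\mathbb{N},+)$ generated by them, a numerical semigroup). The genus $g(S)$ is the cardinality of $\mathbb{N}\setminus S$. *)

theory Defs
  imports Complex_Main
begin

inductive_set monoid_gen :: "nat set \<Rightarrow> nat set" for A :: "nat set" where
  zero: "0 \<in> monoid_gen A"
| add: "a \<in> A \<Longrightarrow> x \<in> monoid_gen A \<Longrightarrow> a + x \<in> monoid_gen A"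

definition genus :: "nat set \<Rightarrow> nat" where
  "genus S = card (UNIV - S)"

definition s' :: "nat \<Rightarrow> nat \<Rightarrow> nat \<Rightarrow> nat" where
  "s' b n i = (b + 1) * b ^ (n + i) + 1"

definition T' :: "nat \<Rightarrow> nat \<Rightarrow> nat set" where
  "T' b n = monoid_gen (range (s' b n))"

end

theory Submission
  imports Defs "HOL-Number_Theory.Number_Theory"
begin


function ff :: "nat \<Rightarrow> nat \<Rightarrow> nat" where
  "ff b N = (if b < 2 \<or> N = 0 then 0 else N div b + ff b (N div b))"
  by pat_completeness auto
termination by (relation "measure (\<lambda>(b,N). N)") auto

declare ff.simps[simp del]

lemma ff_0[simp]: "ff b 0 = 0" by (simp add: ff.simps)

lemma ff_unfold: "b \<ge> 2 \<Longrightarrow> ff b N = N div b + ff b (N div b)"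
  by (cases "N = 0") (auto simp: ff.simps)

lemma ff_rec: assumes "b \<ge> 2" "d < b" shows "ff b (b*Q + d) = Q + ff b Q"
proof -
  have "(b*Q+d) div b = Q" using assms by simp
  thus ?thesis using ff_unfold[OF assms(1), of "b*Q+d"] by simp
qed

lemma ff_small: assumes "b \<ge> 2" "N < b" shows "ff b N = 0"
  using ff_rec[OF assms(1) assms(2), of 0] by simp

lemma ff_mono: assumes "b \<ge> 2" shows "N \<le> M \<Longrightarrow> ff b N \<le> ff b M"
proof (induction M arbitrary: N rule: less_induct)
  case (less M)
  show ?case
  proof (cases "M = 0")
    case True then show ?thesis using less by simp
  next
    case False
    have "M div b < M" using False assms by simp
    moreover have "N div b \<le> M div b" using less.prems by (simp add: div_le_mono)
    ultimately have "ff b (N div b) \<le> ff b (M div b)" using less.IH by blast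
    then show ?thesis using ff_unfold[OF assms, of N] ff_unfold[OF assms, of M]
      \<open>N div b \<le> M div b\<close> by linarith
  qed
qed

lemma div_add_ge: "(N::nat) div b + M div b \<le> (N + M) div b"
  by (metis add.commute div_add1_eq le_add2)

lemma ff_superadd: assumes "b \<ge> 2" shows "ff b N + ff b M \<le> ff b (N + M)"
proof (induction "N + M" arbitrary: N M rule: less_induct)
  case less
  show ?case
  proof (cases "N = 0 \<or> M = 0")
    case True then show ?thesis by auto
  next
    case False
    have "N div b < N" using False assms by (intro div_less_dividend) auto
    moreover have "M div b \<le> M" by simp
    ultimately have lt: "N div b + M div b < N + M" by linarith
    have h1: "ff b (N div b) + ff b (M div b) \<le> ff b (N div b + M div b)"
      using less.hyps[OF lt] .
    have h2: "ff b (N div b + M div b) \<le> ff b ((N+M) div b)"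
      using ff_mono[OF assms div_add_ge] .
    show ?thesis using ff_unfold[OF assms, of N] ff_unfold[OF assms, of M]
      ff_unfold[OF assms, of "N+M"] h1 h2 div_add_ge[of N b M] by linarith
  qed
qed

lemma ff_le: assumes "b \<ge> 2" shows "(b - 1) * ff b N \<le> N"
proof (induction N rule: less_induct)
  case (less N)
  show ?case
  proof (cases "N = 0")
    case True then show ?thesis by simp
  next
    case False
    have "N div b < N" using False assms by simp
    then have ih: "(b-1) * ff b (N div b) \<le> N div b" using less.IH by blast
    have "(b-1) * ff b N = (b-1) * (N div b) + (b-1) * ff b (N div b)"
      using ff_unfold[OF assms, of N] by (simp add: algebra_simps)
    also have "\<dots> \<le> (b-1) * (N div b) + N div b" using ih by simp
    also have "\<dots> = b * (N div b)" using assms by (simp add: algebra_simps)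
    also have "\<dots> \<le> N" by simp
    finally show ?thesis .
  qed
qed

lemma ff_ge: assumes "b \<ge> 2" shows "N \<le> b * ff b N + (b - 1)"
proof -
  have "N div b \<le> ff b N" using ff_unfold[OF assms, of N] by simp
  hence "b * (N div b) \<le> b * ff b N" by simp
  moreover have "N = b * (N div b) + N mod b" by simp
  moreover have "N mod b \<le> b - 1" using assms
    by (metis Suc_pred' le_less_trans less_Suc_eq_le mod_less_divisor not_less pos2)
  ultimately show ?thesis by linarith
qed

lemma ff_pow_Suc: assumes "b \<ge> 2" shows "ff b (b^Suc i) = b^i + ff b (b^i)"
  using ff_rec[OF assms, of 0 "b^i"] assms by simp

lemma ff_pow: assumes "b \<ge> 2" shows "(b - 1) * ff b (b^i) + 1 = b^i"
proof (induction i)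
  case 0 then show ?case using ff_small[OF assms, of 1] assms by simp
next
  case (Suc i)
  have "(b - 1) * ff b (b^Suc i) + 1 = (b-1) * b^i + ((b-1) * ff b (b^i) + 1)"
    using ff_pow_Suc[OF assms, of i] by (simp add: algebra_simps)
  also have "\<dots> = (b-1) * b^i + b^i" using Suc by simp
  also have "\<dots> = b^Suc i" using assms by (simp add: algebra_simps)
  finally show ?case .
qed

lemma ff_mult: assumes "b \<ge> 2" shows "c * ff b M \<le> ff b (c * M)"
proof (induction c)
  case 0 then show ?case by simp
next
  case (Suc c)
  have "Suc c * ff b M = ff b M + c * ff b M" by simp
  also have "\<dots> \<le> ff b M + ff b (c*M)" using Suc by simp
  also have "\<dots> \<le> ff b (M + c*M)" using ff_superadd[OF assms] .
  finally show ?case by simp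
qed

lemma ff_top: assumes "b \<ge> 2"
  shows "b^L \<le> N \<Longrightarrow> N < b^Suc L \<Longrightarrow> ff b N = ff b (N - b^L) + ff b (b^L)"
proof (induction L arbitrary: N)
  case 0
  then show ?case using ff_small[OF assms, of N] ff_small[OF assms, of "N-1"]
    ff_small[OF assms, of 1] assms by simp
next
  case (Suc L)
  define Q where "Q = N div b"
  define d where "d = N mod b"
  have N: "N = b*Q + d" by (simp add: Q_def d_def)
  have d: "d < b" using assms by (simp add: d_def)
  have Q1: "b^L \<le> Q"
  proof (rule ccontr)
    assume "\<not> b^L \<le> Q"
    then have "N div b < b^L" unfolding Q_def by simp
    then have "N < b^L * b" using div_less_iff_less_mult[of b N "b^L"] assms by simp
    then show False using Suc.prems(1) by (simp add: mult.commute)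
  qed
  have Q2: "Q < b^Suc L" using Suc.prems(2) assms unfolding Q_def
    by (simp add: less_mult_imp_div_less mult.commute)
  have ih: "ff b Q = ff b (Q - b^L) + ff b (b^L)" using Suc.IH[OF Q1 Q2] .
  have "N - b^Suc L = b*(Q - b^L) + d" using N Q1 by (simp add: algebra_simps diff_mult_distrib2)
  then have "ff b (N - b^Suc L) = (Q - b^L) + ff b (Q - b^L)" using ff_rec[OF assms d] by simp
  moreover have "ff b N = Q + ff b Q" using ff_rec[OF assms d] N by simp
  moreover have "ff b (b^Suc L) = b^L + ff b (b^L)" using ff_pow_Suc[OF assms] .
  ultimately show ?case using ih Q1 by simp
qed



lemma s'_id: assumes "b \<ge> 2"
  shows "s' b n i + (b - 1) * ff b (b^i) = ((b+1)*b^n + 1) * b^i"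
proof -
  have "s' b n i + (b - 1) * ff b (b^i) = (b+1)*b^n*b^i + ((b-1) * ff b (b^i) + 1)"
    by (simp add: s'_def power_add algebra_simps)
  also have "\<dots> = (b+1)*b^n*b^i + b^i" using ff_pow[OF assms] by simp
  finally show ?thesis by (simp add: algebra_simps)
qed

lemma repr1: assumes "b \<ge> 2" and "x \<in> T' b n"
  shows "\<exists>N t. t \<le> ff b N \<and> x + (b-1)*t = ((b+1)*b^n + 1) * N"
  using assms(2) unfolding T'_def
proof (induction rule: monoid_gen.induct)
  case zero then show ?case by (intro exI[of _ 0]) simp
next
  case (add y x)
  then obtain i where y: "y = s' b n i" by auto
  from add.IH obtain N t where Nt: "t \<le> ff b N" "x + (b-1)*t = ((b+1)*b^n + 1) * N" by blast
  have "t + ff b (b^i) \<le> ff b (N + b^i)" using Nt(1) ff_superadd[OF assms(1), of N "b^i"] by linarith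
  moreover have "y + x + (b-1)*(t + ff b (b^i)) = ((b+1)*b^n + 1) * (N + b^i)"
    using Nt(2) s'_id[OF assms(1), of n i] y by (simp add: algebra_simps)
  ultimately show ?case by blast
qed

lemma crossing: "(g::nat\<Rightarrow>nat) 0 \<le> t \<Longrightarrow> t < g L \<Longrightarrow> \<exists>i<L. g i \<le> t \<and> t < g (Suc i)"
proof (induction L)
  case 0 then show ?case by simp
next
  case (Suc L)
  show ?case
  proof (cases "t < g L")
    case True then show ?thesis using Suc by (meson less_SucI)
  next
    case False then show ?thesis using Suc.prems by auto
  qed
qed

lemma repr2: assumes "b \<ge> 2"
  shows "t \<le> ff b N \<Longrightarrow> x + (b-1)*t = ((b+1)*b^n + 1) * N \<Longrightarrow> x \<in> T' b n"
proof (induction N arbitrary: t x rule: less_induct)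
  case (less N)
  define m where "m = (b+1)*b^n + 1"
  show ?case
  proof (cases "N = 0")
    case True
    then have "x = 0" using less.prems by simp
    then show ?thesis unfolding T'_def by (simp add: monoid_gen.zero)
  next
    case False
    then obtain L where L: "b^L \<le> N" "N < b^(L+1)" using ex_power_ivl1[OF assms, of N] by auto
    have "\<exists>i. b^i \<le> N \<and> ff b (b^i) \<le> t \<and> t - ff b (b^i) \<le> ff b (N - b^i)"
    proof (cases "ff b (b^L) \<le> t")
      case True
      have "ff b N = ff b (N - b^L) + ff b (b^L)" using ff_top[OF assms L(1)] L(2) by simp
      then show ?thesis using True L less.prems(1) by (intro exI[of _ L]) auto
    next
      case False
      have "ff b (b^0) \<le> t" using ff_small[OF assms, of 1] assms by simp
      then obtain i where i: "i < L" "ff b (b^i) \<le> t" "t < ff b (b^Suc i)"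
        using crossing[of "\<lambda>i. ff b (b^i)" t L] False by auto
      have "b^Suc i \<le> b^L" using i(1) assms by (intro power_increasing) auto
      then have biN: "b^Suc i \<le> N" using L by linarith
      have "b^Suc i = (b - 1) * b^i + b^i" using assms by (simp add: algebra_simps)
      then have "(b-1) * b^i \<le> N - b^i" using biN by linarith
      then have "ff b ((b-1)*b^i) \<le> ff b (N - b^i)" by (rule ff_mono[OF assms])
      moreover have "(b-1) * ff b (b^i) \<le> ff b ((b-1)*b^i)" by (rule ff_mult[OF assms])
      moreover have "(b - 1) * ff b (b^i) + 1 = b^i" by (rule ff_pow[OF assms])
      moreover have "t < b^i + ff b (b^i)" using i(3) ff_pow_Suc[OF assms] by simp
      ultimately have "t - ff b (b^i) \<le> ff b (N - b^i)" by linarith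
      moreover have "b^i \<le> N" using biN assms
        by (meson dual_order.trans le_SucI power_increasing_iff one_less_numeral_iff
            order_less_le_trans semiring_norm(76) order_refl)
      ultimately show ?thesis using i by blast
    qed
    then obtain i where i: "b^i \<le> N" "ff b (b^i) \<le> t" "t - ff b (b^i) \<le> ff b (N - b^i)" by blast
    define t' where "t' = t - ff b (b^i)"
    define N' where "N' = N - b^i"
    have "0 < b^i" using assms by simp
    then have N'lt: "N' < N" unfolding N'_def using i(1) False by simp
    have idf: "s' b n i + (b - 1) * ff b (b^i) = m * b^i" using s'_id[OF assms] m_def by simp
    have eq1: "x + (b-1)*t' + (b-1) * ff b (b^i) = m * N' + m * b^i"
    proof -
      have "t = t' + ff b (b^i)" using i(2) unfolding t'_def by simp
      then have a1: "(b-1)*t = (b-1)*t' + (b-1) * ff b (b^i)" by (simp add: distrib_left)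
      have "N = N' + b^i" using i(1) unfolding N'_def by simp
      then have a2: "m*N = m*N' + m*b^i" by (simp add: distrib_left)
      show ?thesis using a1 a2 less.prems(2) unfolding m_def by linarith
    qed
    have "(b-1)*t' \<le> (b-1) * ff b N'" using i(3) unfolding t'_def N'_def by simp
    also have "\<dots> \<le> N'" by (rule ff_le[OF assms])
    also have "\<dots> \<le> m * N'" unfolding m_def by simp
    finally have le: "(b-1)*t' \<le> m * N'" .
    have xs: "x = s' b n i + (m*N' - (b-1)*t')" using eq1 idf le by linarith
    have "m*N' - (b-1)*t' + (b-1)*t' = m*N'" using le by simp
    then have "m*N' - (b-1)*t' \<in> T' b n"
      using less.IH[OF N'lt, of t' "m*N' - (b-1)*t'"] i(3) unfolding t'_def N'_def m_def by simp
    then show ?thesis unfolding xs T'_def by (auto intro: monoid_gen.add)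
  qed
qed



lemma cop: fixes b n :: nat assumes "b \<ge> 2" "b mod 3 \<noteq> 1"
  shows "coprime (b-1) ((b+1)*b^n + 1)"
proof -
  have c0: "(1 + (b-1)) mod (b-1) = 1 mod (b-1)" by (rule mod_add_self2)
  have "1 + (b-1) = b" using assms(1) by simp
  then have c1: "[b = 1] (mod (b-1))" using c0 by (simp add: cong_def)
  have "[(b+1)*b^n + 1 = (1+1)*1^n + 1] (mod (b-1))"
    by (intro cong_add cong_mult cong_pow c1 cong_refl)
  moreover have e: "(1+1)*1^n + 1 = (3::nat)" by simp
  ultimately have c2: "[(b+1)*b^n + 1 = 3] (mod (b-1))" by metis
  have "\<not> (3::nat) dvd (b - 1)" using assms by presburger
  then have "coprime (3::nat) (b-1)" by (intro prime_imp_coprime) auto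
  then have "coprime (b-1) 3" by (simp add: coprime_commute)
  then show ?thesis using coprime_cong_cong_right[OF c2] by simp
qed

lemma canon_exists: assumes "coprime (k::nat) m" "m > 0"
  shows "\<exists>t<m. \<exists>N. x + k*t = m*N"
proof -
  obtain u where u: "[k*u = 1] (mod m)" using cong_solve_coprime_nat[OF assms(1)] by auto
  define t where "t = (x*(m-1)*u) mod m"
  have e1: "[k*t = k*(x*(m-1)*u)] (mod m)" unfolding t_def by (simp add: cong_def mod_mult_right_eq)
  have e2: "k*(x*(m-1)*u) = (k*u)*(x*(m-1))" by (simp add: ac_simps)
  have e3: "[(k*u)*(x*(m-1)) = 1*(x*(m-1))] (mod m)" by (intro cong_mult u cong_refl)
  have "[k*t = x*(m-1)] (mod m)" using cong_trans[OF e1 e3[folded e2]] by simp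
  then have "[x + k*t = x + x*(m-1)] (mod m)" by (intro cong_add cong_refl)
  moreover have "x + x*(m-1) = x*m" using assms(2) by (cases m) (auto simp: algebra_simps)
  ultimately have "[x + k*t = 0] (mod m)" by (simp add: cong_def)
  then have "m dvd x + k*t" by (simp add: cong_0_iff)
  moreover have "t < m" unfolding t_def using assms(2) by simp
  ultimately show ?thesis by (auto elim!: dvdE)
qed

lemma canon_unique: assumes "coprime (k::nat) m" "x + k*t = m*N" "x + k*t' = m*N'" "t < m"
  shows "t' mod m = t"
proof -
  have "[x + k*t = x + k*t'] (mod m)" using assms(2,3) by (simp add: cong_def)
  then have "[k*t = k*t'] (mod m)" by (simp add: cong_add_lcancel_nat)
  then have "[t = t'] (mod m)" using cong_mult_lcancel_nat[OF assms(1)] by simp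
  then show ?thesis using assms(4) by (simp add: cong_def)
qed

lemma member_iff: assumes "b \<ge> 2" "b mod 3 \<noteq> 1"
  and "t < (b+1)*b^n + 1" "x + (b-1)*t = ((b+1)*b^n + 1) * N"
  shows "x \<in> T' b n \<longleftrightarrow> t \<le> ff b N"
proof
  assume "t \<le> ff b N" then show "x \<in> T' b n" using repr2[OF assms(1)] assms(4) by blast
next
  assume "x \<in> T' b n"
  then obtain N' t' where Nt: "t' \<le> ff b N'" "x + (b-1)*t' = ((b+1)*b^n + 1) * N'"
    using repr1[OF assms(1)] by blast
  define a where "a = (b+1)*b^n"
  define m where "m = a + 1"
  have cp: "coprime (b-1) m" using cop[OF assms(1,2)] unfolding m_def a_def by simp
  have tm: "t' mod m = t" using canon_unique[OF cp, of x t N t' N'] assms(3,4) Nt(2)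
    unfolding m_def a_def by simp
  define c where "c = t' div m"
  have t': "t' = t + m*c" using tm unfolding c_def by (metis mod_mult_div_eq add.commute mult.commute)
  have "m*N' = m*N + m*((b-1)*c)" using Nt(2) assms(4) t' unfolding m_def a_def
    by (simp add: algebra_simps)
  then have "m*N' = m*(N + (b-1)*c)" by (simp add: distrib_left)
  then have "m = 0 \<or> N' = N + (b-1)*c" by (simp only: mult_cancel_left)
  then have N': "N' = N + (b-1)*c" unfolding m_def by simp
  show "t \<le> ff b N"
  proof (rule ccontr)
    assume nt: "\<not> t \<le> ff b N"
    show False
    proof (cases "c = 0")
      case True then show False using nt Nt(1) N' t' by simp
    next
      case False
      have ta: "t \<le> a" using assms(3) unfolding a_def by simp
      obtain t0 where t0: "t = Suc t0" using nt by (cases t) auto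
      obtain B where B: "b = Suc B" using assms(1) by (cases b) auto
      have bB: "b - 1 = B" using B by simp
      have h1: "B*t' \<le> B * ff b N'" using Nt(1) by simp
      have h2: "B * ff b N' \<le> N'" using ff_le[OF assms(1)] bB by simp
      have h3: "N \<le> b * ff b N + B" using ff_ge[OF assms(1)] bB by simp
      have "ff b N \<le> t0" using nt t0 by simp
      then have h4: "b * ff b N \<le> b * t0" by (rule mult_le_mono2)
      have h5: "b * t0 = B * t0 + t0" using B by simp
      have h6: "B*t' = B*t0 + B + B*c*a + B*c"
        using t' t0 unfolding m_def by (simp add: algebra_simps)
      have "1 \<le> B" using assms(1) B by simp
      moreover have "1 \<le> c" using False by simp
      ultimately have "1*1 \<le> B*c" by (rule mult_le_mono)
      then have "1 \<le> B*c" by simp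
      then have h8: "a \<le> B*c*a" using mult_le_mono1[of 1 "B*c" a] by simp
      have N'': "N' = N + B*c" using N' bB by simp
      from h1 h2 h3 h4 h5 h6 h8 ta N'' t0 show False by linarith
    qed
  qed
qed



lemma bij_gaps: fixes n :: nat assumes "b \<ge> 2" "b mod 3 \<noteq> 1"
  defines "m \<equiv> (b+1)*b^n + 1"
  shows "bij_betw (\<lambda>(N,t). m*N - (b-1)*t)
           {(N,t). t < m \<and> (b-1)*t \<le> m*N \<and> ff b N < t} (UNIV - T' b n)"
proof -
  have cp: "coprime (b-1) m" using cop[OF assms(1,2)] unfolding m_def by simp
  have m0: "m > 0" unfolding m_def by simp
  show ?thesis
  proof (rule bij_betwI')
    fix p q assume "p \<in> {(N,t). t < m \<and> (b-1)*t \<le> m*N \<and> ff b N < t}"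
      "q \<in> {(N,t). t < m \<and> (b-1)*t \<le> m*N \<and> ff b N < t}"
    then obtain N t N' t' where p: "p = (N,t)" "t < m" "(b-1)*t \<le> m*N"
      and q: "q = (N',t')" "t' < m" "(b-1)*t' \<le> m*N'" by auto
    show "((\<lambda>(N,t). m*N - (b-1)*t) p = (\<lambda>(N,t). m*N - (b-1)*t) q) = (p = q)"
    proof
      assume h: "(\<lambda>(N,t). m*N - (b-1)*t) p = (\<lambda>(N,t). m*N - (b-1)*t) q"
      define x where "x = m*N - (b-1)*t"
      have e1: "x + (b-1)*t = m*N" using p unfolding x_def by simp
      have e2: "x + (b-1)*t' = m*N'" using q h p unfolding x_def by simp
      have "t mod m = t'" using canon_unique[OF cp e2 e1 q(2)] .
      then have tt: "t = t'" using p(2) by simp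
      then have "m*N = m*N'" using e1 e2 by simp
      then have "N = N'" using m0 by simp
      then show "p = q" using p q tt by simp
    qed simp
  next
    fix p assume "p \<in> {(N,t). t < m \<and> (b-1)*t \<le> m*N \<and> ff b N < t}"
    then obtain N t where p: "p = (N,t)" "t < m" "(b-1)*t \<le> m*N" "ff b N < t" by auto
    define x where "x = m*N - (b-1)*t"
    have e1: "x + (b-1)*t = m*N" using p unfolding x_def by simp
    have tm: "t < (b+1)*b^n + 1" using p unfolding m_def by simp
    have "x \<notin> T' b n" using member_iff[OF assms(1,2) tm e1[unfolded m_def]] p by simp
    then show "(\<lambda>(N,t). m*N - (b-1)*t) p \<in> UNIV - T' b n" using p x_def by simp
  next
    fix x assume "x \<in> UNIV - T' b n"
    then have xn: "x \<notin> T' b n" by simp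
    obtain t N where tN: "t < m" "x + (b-1)*t = m*N" using canon_exists[OF cp m0, of x] by auto
    have tm: "t < (b+1)*b^n + 1" using tN unfolding m_def by simp
    have "\<not> t \<le> ff b N" using member_iff[OF assms(1,2) tm tN(2)[unfolded m_def]] xn by simp
    then have "(N,t) \<in> {(N,t). t < m \<and> (b-1)*t \<le> m*N \<and> ff b N < t}" using tN by auto
    moreover have "x = (\<lambda>(N,t). m*N - (b-1)*t) (N,t)" using tN by simp
    ultimately show "\<exists>p \<in> {(N,t). t < m \<and> (b-1)*t \<le> m*N \<and> ff b N < t}.
        x = (\<lambda>(N,t). m*N - (b-1)*t) p" by blast
  qed
qed

lemma card_split: assumes "b \<ge> 2" and ba: "b \<le> a"
  and H: "\<And>N. ff b N < a \<Longrightarrow> N < N1"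
  defines "m \<equiv> a + 1"
  shows "card {(N,t). t < m \<and> (b-1)*t \<le> m*N \<and> ff b N < t}
       = (\<Sum>N<N1. a - ff b N) - (\<Sum>N<b-1. a - (m*N) div (b-1))"
    and "(\<Sum>N<b-1. a - (m*N) div (b-1)) \<le> (\<Sum>N<N1. a - ff b N)"
proof -
  define E where "E = (SIGMA N:{..<N1}. {ff b N<..<m})"
  define D where "D = (SIGMA N:{..<b-1}. {(m*N) div (b-1)<..<m})"
  have b1: "b - 1 > 0" using assms(1) by simp
  have Dchar: "(N,t) \<in> D \<longleftrightarrow> t < m \<and> m*N < (b-1)*t" for N t
  proof
    assume "(N,t) \<in> D"
    then have "(m*N) div (b-1) < t" "t < m" by (auto simp: D_def)
    then show "t < m \<and> m*N < (b-1)*t" using div_less_iff_less_mult[OF b1] by (simp add: mult.commute)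
  next
    assume h: "t < m \<and> m*N < (b-1)*t"
    then have "(m*N) div (b-1) < t" using div_less_iff_less_mult[OF b1] by (simp add: mult.commute)
    moreover have "N < b - 1"
    proof (rule ccontr)
      assume "\<not> N < b-1"
      then have "m*(b-1) \<le> m*N" by simp
      moreover have "(b-1)*t < (b-1)*m" using h b1 by simp
      then have "(b-1)*t < m*(b-1)" by (simp add: mult.commute)
      ultimately show False using h by linarith
    qed
    ultimately show "(N,t) \<in> D" using h by (auto simp: D_def)
  qed
  have Echar: "(N,t) \<in> E \<longleftrightarrow> t < m \<and> ff b N < t" for N t
  proof
    assume "t < m \<and> ff b N < t"
    then have "ff b N < a" unfolding m_def by simp
    then show "(N,t) \<in> E" using H \<open>t < m \<and> ff b N < t\<close> by (auto simp: E_def)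
  qed (auto simp: E_def)
  have PED: "{(N,t). t < m \<and> (b-1)*t \<le> m*N \<and> ff b N < t} = E - D"
    using Dchar Echar by auto
  have DE: "D \<subseteq> E"
  proof (clarsimp)
    fix N t assume "(N,t) \<in> D"
    then have h: "t < m" "m*N < (b-1)*t" using Dchar by auto
    have "b - 1 \<le> m" unfolding m_def using ba by simp
    then have "(b-1)*N \<le> m*N" by (rule mult_le_mono1)
    then have "(b-1)*N < (b-1)*t" using h by linarith
    then have "N < t" by simp
    moreover have "ff b N \<le> N"
    proof -
      have "1 \<le> b - 1" using b1 by simp
      then have "1 * ff b N \<le> (b-1) * ff b N" by (rule mult_le_mono1)
      then have "ff b N \<le> (b-1) * ff b N" by simp
      then show ?thesis using ff_le[OF assms(1), of N] by linarith
    qed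
    ultimately show "(N,t) \<in> E" using h Echar by simp
  qed
  have fE: "finite E" unfolding E_def by simp
  have cE: "card E = (\<Sum>N<N1. a - ff b N)" unfolding E_def m_def by (simp add: card_SigmaI)
  have cD: "card D = (\<Sum>N<b-1. a - (m*N) div (b-1))" unfolding D_def m_def by (simp add: card_SigmaI)
  show "card {(N,t). t < m \<and> (b-1)*t \<le> m*N \<and> ff b N < t}
       = (\<Sum>N<N1. a - ff b N) - (\<Sum>N<b-1. a - (m*N) div (b-1))"
    unfolding PED using card_Diff_subset[OF finite_subset[OF DE fE] DE] cE cD by simp
  show "(\<Sum>N<b-1. a - (m*N) div (b-1)) \<le> (\<Sum>N<N1. a - ff b N)"
    using card_mono[OF fE DE] cE cD by simp
qed



lemma sum_add_range: "(\<Sum>N<m+n. (g::nat\<Rightarrow>'a::comm_monoid_add) N) = (\<Sum>N<m. g N) + (\<Sum>j<n. g (m+j))"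
  by (induction n) (simp_all add: add.assoc)

lemma sum_blocks: "(\<Sum>N<b*K. (g::nat\<Rightarrow>'a::comm_monoid_add) N) = (\<Sum>Q<K. \<Sum>d<b. g (b*Q+d))"
proof (induction K)
  case 0 then show ?case by simp
next
  case (Suc K)
  have "b * Suc K = b*K + b" by simp
  then show ?case using sum_add_range[of g "b*K" b] Suc by (simp add: add.commute)
qed

lemma gauss2: "2 * (\<Sum>Q<K. Q) = K * (K - 1::nat)"
proof (induction K)
  case 0 then show ?case by simp
next
  case (Suc K) then show ?case by (cases K) (simp_all add: algebra_simps)
qed

lemma pair_sum: assumes "coprime k (a+1)" "0 < N" "N < k"
  shows "((a+1)*N) div k + ((a+1)*(k-N)) div k = (a::nat)"
proof -
  define q where "q = ((a+1)*N) div k"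
  define r where "r = ((a+1)*N) mod k"
  have k0: "k > 0" using assms by simp
  have F3: "(a+1)*N = k*q + r" unfolding q_def r_def by simp
  have rk: "r < k" unfolding r_def using k0 by simp
  have r0: "r \<noteq> 0"
  proof
    assume "r = 0"
    then have "k dvd (a+1)*N" unfolding r_def by (simp add: mod_eq_0_iff_dvd)
    then show False using coprime_dvd_mult_right_iff[OF assms(1), of N] assms(2,3)
      by (auto dest: dvd_imp_le)
  qed
  have "(a+1)*N < (a+1)*k" using assms(3) by (intro mult_less_mono2) auto
  then have "q < a+1" unfolding q_def using div_less_iff_less_mult[OF k0] by (simp add: mult.commute)
  then obtain e where e: "a = q + e" using le_Suc_ex by (metis Suc_eq_plus1 less_Suc_eq_le)
  define X1 where "X1 = (a+1)*(k-N)"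
  define X2 where "X2 = (a+1)*N"
  define X3 where "X3 = (a+1)*k"
  define Y1 where "Y1 = k*q"
  define Y2 where "Y2 = k*e"
  have F1: "X1 + X2 = X3" unfolding X1_def X2_def X3_def using assms(3)
    by (simp add: add_mult_distrib2[symmetric])
  have F2: "X3 = Y1 + Y2 + k" unfolding X3_def Y1_def Y2_def e by (simp add: algebra_simps)
  have "X1 = Y2 + (k - r)" using F1 F2 F3 rk unfolding X2_def[symmetric] Y1_def[symmetric] by linarith
  then have "(a+1)*(k-N) = (k - r) + k*e" unfolding X1_def Y2_def by simp
  moreover have "(k - r + k*e) div k = e"
    using rk r0 by (intro div_nat_eqI) (auto simp: algebra_simps)
  ultimately have "((a+1)*(k-N)) div k = e" by simp
  then show ?thesis using e unfolding q_def by simp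
qed

lemma D_sum: assumes "coprime k (a+1)" "k \<ge> 1"
  shows "2 * (\<Sum>N<k. a - ((a+1)*N) div k) = (k+1)*(a::nat)"
proof -
  define q where "q N = ((a+1)*N) div k" for N
  have k0: "k > 0" using assms by simp
  have qa: "q N \<le> a" if "N < k" for N
  proof -
    have "(a+1)*N < (a+1)*k" using that by (intro mult_less_mono2) auto
    then have "q N < a+1" unfolding q_def using div_less_iff_less_mult[OF k0] by (simp add: mult.commute)
    then show ?thesis by simp
  qed
  obtain k' where k': "k = Suc k'" using assms(2) by (cases k) auto
  have s1: "(\<Sum>N<k. a - q N) + (\<Sum>N<k. q N) = k * a"
  proof -
    have "(\<Sum>N<k. a - q N) + (\<Sum>N<k. q N) = (\<Sum>N<k. a - q N + q N)" by (simp add: sum.distrib)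
    also have "\<dots> = (\<Sum>N<k. a)" using qa by (intro sum.cong) auto
    finally show ?thesis by simp
  qed
  have s2: "(\<Sum>N<k. q N) = (\<Sum>i<k'. q (Suc i))" unfolding k' sum.lessThan_Suc_shift
    by (simp add: q_def)
  have s3': "(\<Sum>i<k'. q (Suc (k' - Suc i))) = (\<Sum>i<k'. q (k - Suc i))"
    by (intro sum.cong refl) (auto simp: k' Suc_diff_Suc)
  have s3: "(\<Sum>i<k'. q (Suc i)) = (\<Sum>i<k'. q (k - Suc i))"
    using sum.nat_diff_reindex[of "\<lambda>i. q (Suc i)" k'] s3' by simp
  have s4: "(\<Sum>i<k'. q (Suc i)) + (\<Sum>i<k'. q (k - Suc i)) = k' * a"
  proof -
    have "(\<Sum>i<k'. q (Suc i)) + (\<Sum>i<k'. q (k - Suc i)) = (\<Sum>i<k'. q (Suc i) + q (k - Suc i))"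
      by (simp add: sum.distrib)
    also have "\<dots> = (\<Sum>i<k'. a)"
    proof (intro sum.cong refl)
      fix i assume "i \<in> {..<k'}"
      then have "0 < Suc i" "Suc i < k" using k' by auto
      then show "q (Suc i) + q (k - Suc i) = a" unfolding q_def using pair_sum[OF assms(1)] by blast
    qed
    finally show ?thesis by simp
  qed
  have "k * a = k' * a + a" using k' by simp
  then show ?thesis using s1 s2 s3 s4 unfolding q_def k' by simp
qed



lemma ff_base: assumes "b \<ge> 2" shows "ff b (b*b - 1) = b - 1"
proof -
  have "b*b - 1 = b*(b-1) + (b-1)" using assms by (cases b) (auto simp: algebra_simps)
  moreover have "b - 1 < b" using assms by simp
  ultimately show ?thesis using ff_rec[OF assms, of "b-1" "b-1"] ff_small[OF assms, of "b-1"] by simp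
qed

lemma ffQ: assumes "b \<ge> 2" shows "ff b (b^k*(b*b-1)) + 2 = (b+1)*b^k"
proof (induction k)
  case 0 then show ?case using ff_base[OF assms] assms by simp
next
  case (Suc k)
  obtain Z where Z: "b*b = Suc Z" using assms by (cases "b*b") auto
  have "b^Suc k*(b*b-1) = b*(b^k*(b*b-1)) + 0" by simp
  then have "ff b (b^Suc k*(b*b-1)) = b^k*(b*b-1) + ff b (b^k*(b*b-1))"
    using ff_rec[OF assms, of 0 "b^k*(b*b-1)"] assms by (simp add: mult.assoc)
  then have "ff b (b^Suc k*(b*b-1)) + 2 = b^k*Z + (b+1)*b^k" using Suc Z by simp
  also have "\<dots> = b^k*(Z+1) + b*b^k" by (simp add: algebra_simps)
  also have "\<dots> = (b*b)*b^k + b*b^k" using Z by simp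
  also have "\<dots> = (b+1)*b^Suc k" by (simp add: algebra_simps)
  finally show ?case .
qed

lemma G_rec: assumes "b \<ge> 2"
  shows "(\<Sum>N<b^Suc k*(b*b-1). ff b N) = b * ((\<Sum>Q<b^k*(b*b-1). Q) + (\<Sum>N<b^k*(b*b-1). ff b N))"
proof -
  have "(\<Sum>N<b^Suc k*(b*b-1). ff b N) = (\<Sum>N<b*(b^k*(b*b-1)). ff b N)" by (simp add: mult.assoc)
  also have "\<dots> = (\<Sum>Q<b^k*(b*b-1). \<Sum>d<b. ff b (b*Q+d))" by (rule sum_blocks)
  also have "\<dots> = (\<Sum>Q<b^k*(b*b-1). b * (Q + ff b Q))"
    using ff_rec[OF assms] by (intro sum.cong refl) simp
  also have "\<dots> = b * (\<Sum>Q<b^k*(b*b-1). Q + ff b Q)" by (rule sum_distrib_left[symmetric])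
  also have "\<dots> = b * ((\<Sum>Q<b^k*(b*b-1). Q) + (\<Sum>N<b^k*(b*b-1). ff b N))"
    by (simp add: sum.distrib)
  finally show ?thesis .
qed

lemma G0: assumes "b \<ge> 2"
  shows "2 * (\<Sum>N<b*b-1. ff b N) + 2*(b-1) = b*(b*(b-1))"
proof -
  have "(\<Sum>N<b*b. ff b N) = (\<Sum>Q<b. \<Sum>d<b. ff b (b*Q+d))" by (rule sum_blocks)
  also have "\<dots> = (\<Sum>Q<b. b * Q)"
    using ff_rec[OF assms] ff_small[OF assms] by (intro sum.cong refl) simp
  also have "\<dots> = b * (\<Sum>Q<b. Q)" by (simp add: sum_distrib_left)
  finally have h1: "(\<Sum>N<b*b. ff b N) = b * (\<Sum>Q<b. Q)" .
  obtain Z where Z: "b*b = Suc Z" using assms by (cases "b*b") auto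
  have "(\<Sum>N<b*b. ff b N) = (\<Sum>N<b*b-1. ff b N) + ff b (b*b-1)" using Z by simp
  then have "(\<Sum>N<b*b-1. ff b N) + (b-1) = b * (\<Sum>Q<b. Q)" using h1 ff_base[OF assms] by simp
  then have "2*(\<Sum>N<b*b-1. ff b N) + 2*(b-1) = b * (2*(\<Sum>Q<b. Q))" by simp
  then show ?thesis using gauss2[of b] by simp
qed

lemma G_formula: assumes "b \<ge> 2"
  shows "2 * real (\<Sum>N<b^k*(b*b-1). ff b N) =
     (real b - 1)*(real b + 1)^2*(real b^k)^2 - (real b^2 - 1)*real k*real b^k
       - (real b - 1)*(2*real b + 3)*real b^k"
proof (induction k)
  case 0
  have "real (2 * (\<Sum>N<b*b-1. ff b N) + 2*(b-1)) = real (b*(b*(b-1)))" using G0[OF assms] by simp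
  then have "2 * real (\<Sum>N<b*b-1. ff b N) + 2*(real b-1) = real b*(real b*(real b-1))"
    using assms by (simp add: of_nat_diff)
  then show ?case by (simp add: algebra_simps power2_eq_square)
next
  case (Suc k)
  define K where "K = b^k*(b*b-1)"
  have gk0: "2 * (\<Sum>Q<K. Q) = K*(K-1)" by (rule gauss2)
  have gk: "2 * real (\<Sum>Q<K. Q) = real K * (real K - 1)"
  proof (cases K)
    case 0 then show ?thesis by simp
  next
    case (Suc K0)
    have "real (2 * (\<Sum>Q<K. Q)) = real (K*(K-1))" using gk0 by simp
    then show ?thesis using Suc by (simp add: of_nat_diff) (simp add: ring_distribs; linarith)
  qed
  have rK: "real K = real b^k * (real b^2 - 1)" unfolding K_def using assms
    by (simp add: of_nat_diff power2_eq_square)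
  have "real (2*(\<Sum>N<b^Suc k*(b*b-1). ff b N)) = real (b * (2*(\<Sum>Q<K. Q) + 2*(\<Sum>N<K. ff b N)))"
    using G_rec[OF assms, of k] unfolding K_def by (simp add: algebra_simps)
  also have "\<dots> = real b * (2 * real (\<Sum>Q<K. Q) + 2 * real (\<Sum>N<K. ff b N))" by simp
  also have "\<dots> = real b * (real K * (real K - 1) + 2 * real (\<Sum>N<K. ff b N))"
    by (simp only: gk)
  finally have "2 * real (\<Sum>N<b^Suc k*(b*b-1). ff b N) =
     real b * (real K * (real K - 1) + 2 * real (\<Sum>N<K. ff b N))" by simp
  also have "\<dots> = real b * (real K * (real K - 1) + ((real b - 1)*(real b + 1)^2*(real b^k)^2 - (real b^2 - 1)*real k*real b^k
       - (real b - 1)*(2*real b + 3)*real b^k))" using Suc unfolding K_def by simp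
  also have "\<dots> = (real b - 1)*(real b + 1)^2*(real b^Suc k)^2 - (real b^2 - 1)*real (Suc k)*real b^Suc k
       - (real b - 1)*(2*real b + 3)*real b^Suc k"
    unfolding rK by (simp add: algebra_simps power2_eq_square)
  finally show ?case .
qed



lemma Esum: assumes "b \<ge> 2" "n \<ge> 2"
  defines "N0 \<equiv> b^n*(b*b-1)" and "a \<equiv> (b+1)*b^n"
  shows "\<And>N. ff b N < a \<Longrightarrow> N < N0 + 2*b"
    and "(\<Sum>N<N0+2*b. a - ff b N) = 3*b + (N0*a - (\<Sum>N<N0. ff b N))"
    and "(\<Sum>N<N0. ff b N) \<le> N0*a"
proof -
  obtain n2 where n2: "n = Suc (Suc n2)" using assms(2) by (metis add_2_eq_Suc le_Suc_ex)
  define Q where "Q = b^n2*(b*b-1)"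
  have N0Q: "N0 = b*(b*Q)" unfolding N0_def Q_def n2 by (simp add: algebra_simps)
  have ffN0a: "ff b N0 + 2 = a" unfolding N0_def a_def by (rule ffQ[OF assms(1)])
  have b0: "0 < b" using assms by simp
  have ffN0: "ff b N0 = b*Q + Q + ff b Q"
    using ff_rec[OF assms(1) b0, of "b*Q"] ff_rec[OF assms(1) b0, of Q] N0Q by simp
  have near: "ff b (N0 + j) = ff b N0 + j div b" if "j < 2*b" for j
  proof -
    have jd: "j div b < 2" using that b0 by (simp add: div_less_iff_less_mult mult.commute)
    then have jdb: "j div b < b" using assms by simp
    have jm: "j mod b < b" using b0 by simp
    have "N0 + j = b*(b*Q + j div b) + j mod b" unfolding N0Q
      by (simp add: algebra_simps)
    then have "ff b (N0 + j) = (b*Q + j div b) + ff b (b*Q + j div b)"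
      using ff_rec[OF assms(1) jm] by simp
    also have "\<dots> = b*Q + j div b + Q + ff b Q" using ff_rec[OF assms(1) jdb] by simp
    finally show ?thesis using ffN0 by simp
  qed
  have far: "a \<le> ff b (N0 + 2*b)"
  proof -
    have e: "N0 + 2*b = b*(b*Q + 2) + 0" unfolding N0Q by (simp add: algebra_simps)
    have "ff b (b*(b*Q + 2) + 0) = (b*Q + 2) + ff b (b*Q + 2)" by (rule ff_rec[OF assms(1) b0])
    then have "ff b (N0 + 2*b) = (b*Q + 2) + ff b (b*Q + 2)" by (simp only: e)
    moreover have "ff b (b*Q + 0) \<le> ff b (b*Q + 2)" by (rule ff_mono[OF assms(1)]) simp
    moreover have "ff b (b*Q + 0) = Q + ff b Q" using ff_rec[OF assms(1) b0] .
    ultimately show ?thesis using ffN0 ffN0a by simp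
  qed
  show "N < N0 + 2*b" if "ff b N < a" for N
  proof (rule ccontr)
    assume "\<not> N < N0 + 2*b"
    then have "ff b (N0 + 2*b) \<le> ff b N" by (intro ff_mono[OF assms(1)]) simp
    then show False using far that by simp
  qed
  have le: "ff b N \<le> a" if "N < N0" for N
  proof -
    have "ff b N \<le> ff b N0" using that by (intro ff_mono[OF assms(1)]) simp
    then show ?thesis using ffN0a by simp
  qed
  have s1: "(\<Sum>N<N0+2*b. a - ff b N) = (\<Sum>N<N0. a - ff b N) + (\<Sum>j<2*b. a - ff b (N0+j))"
    by (rule sum_add_range)
  have "(\<Sum>j<2*b. a - ff b (N0+j)) = (\<Sum>j<b*2. 2 - j div b)"
    using near ffN0a by (intro sum.cong) (auto simp: mult.commute)
  also have "\<dots> = (\<Sum>Q<2. \<Sum>d<b. 2 - (b*Q+d) div b)" by (rule sum_blocks)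
  also have "\<dots> = (\<Sum>Q<2. \<Sum>d<b. 2 - Q)" using b0 by (intro sum.cong refl) simp
  also have "\<dots> = 3*b" by (simp add: numeral_2_eq_2)
  finally have s2: "(\<Sum>j<2*b. a - ff b (N0+j)) = 3*b" .
  have s3: "(\<Sum>N<N0. a - ff b N) = N0*a - (\<Sum>N<N0. ff b N)"
  proof -
    have "(\<Sum>N<N0. a - ff b N) = (\<Sum>N<N0. a) - (\<Sum>N<N0. ff b N)"
      by (rule sum_subtractf_nat) (use le in simp)
    then show ?thesis by (simp add: mult.commute)
  qed
  have "(\<Sum>N<N0. ff b N) \<le> (\<Sum>N<N0. a)" using le by (intro sum_mono) simp
  then show "(\<Sum>N<N0. ff b N) \<le> N0*a" by simp
  show "(\<Sum>N<N0+2*b. a - ff b N) = 3*b + (N0*a - (\<Sum>N<N0. ff b N))" using s1 s2 s3 by simp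
qed

theorem mainTheorem14:
  fixes b n :: nat
  assumes "b \<ge> 2" and "b mod 3 \<noteq> 1" and "n \<ge> 2"
  shows "real (genus (T' b n)) =
    3 * real b + (real b ^ (2 * n) * (real b ^ 3 + real b ^ 2 - real b - 1)
      + real b ^ n * (real b ^ 2 * (real n + 1) - (real n + 3))) / 2"
proof -
  define a where "a = (b+1)*b^n"
  define N0 where "N0 = b^n*(b*b-1)"
  define Gs where "Gs = (\<Sum>N<N0. ff b N)"
  define Ds where "Ds = (\<Sum>N<b-1. a - ((a+1)*N) div (b-1))"
  define Es where "Es = (\<Sum>N<N0+2*b. a - ff b N)"
  have "1 \<le> b^n" using assms(1) by simp
  then have "(b+1)*1 \<le> (b+1)*b^n" by (rule mult_le_mono2)
  then have ba: "b \<le> a" unfolding a_def by simp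
  have H: "\<And>N. ff b N < a \<Longrightarrow> N < N0 + 2*b" using Esum(1)[OF assms(1,3)] unfolding a_def N0_def .
  have E2: "Es = 3*b + (N0*a - Gs)" using Esum(2)[OF assms(1,3)] unfolding Es_def a_def N0_def Gs_def .
  have E3: "Gs \<le> N0*a" using Esum(3)[OF assms(1,3)] unfolding a_def N0_def Gs_def .
  have bij: "bij_betw (\<lambda>(N,t). (a+1)*N - (b-1)*t)
           {(N,t). t < a+1 \<and> (b-1)*t \<le> (a+1)*N \<and> ff b N < t} (UNIV - T' b n)"
    using bij_gaps[OF assms(1,2), of n] unfolding a_def .
  have cs: "card {(N,t). t < a+1 \<and> (b-1)*t \<le> (a+1)*N \<and> ff b N < t} = Es - Ds"
    and cs2: "Ds \<le> Es"
    using card_split[OF assms(1) ba H] unfolding Es_def Ds_def by auto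
  have g: "genus (T' b n) = Es - Ds" unfolding genus_def using bij_betw_same_card[OF bij] cs by simp
  have cp: "coprime (b-1) (a+1)" using cop[OF assms(1,2), of n] unfolding a_def by simp
  have D2: "2*Ds = (b-1+1)*a" unfolding Ds_def using D_sum[OF cp] assms(1) by simp
  have D2r: "2 * real Ds = real b * real a" using D2 assms(1)
    by (metis le_add_diff_inverse2 le_trans nat_1_add_1 nat_le_linear not_one_le_zero of_nat_mult
        of_nat_numeral one_le_numeral)
  have G2: "2 * real Gs = (real b - 1)*(real b + 1)^2*(real b^n)^2 - (real b^2 - 1)*real n*real b^n
       - (real b - 1)*(2*real b + 3)*real b^n" unfolding Gs_def N0_def by (rule G_formula[OF assms(1)])
  have rN0: "real N0 = real b^n * (real b^2 - 1)" unfolding N0_def using assms(1)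
    by (simp add: of_nat_diff power2_eq_square)
  have ra: "real a = (real b + 1) * real b^n" unfolding a_def by (simp add: algebra_simps)
  have "real (genus (T' b n)) = real Es - real Ds" using g cs2 by (simp add: of_nat_diff)
  also have "\<dots> = 3 * real b + real N0 * real a - real Gs - real Ds"
    using E2 E3 by (simp add: of_nat_diff)
  finally have main: "real (genus (T' b n)) = 3 * real b + real N0 * real a - real Gs - real Ds" .
  have p2n: "real b ^ (2*n) = (real b ^ n)^2" by (simp add: power_mult[symmetric] mult.commute)
  have Gs_eq: "real Gs = ((real b - 1)*(real b + 1)^2*(real b^n)^2 - (real b^2 - 1)*real n*real b^n
       - (real b - 1)*(2*real b + 3)*real b^n) / 2" using G2 by simp
  have Ds_eq: "real Ds = real b * real a / 2" using D2r by simp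
  define X where "X = real b ^ n"
  have p3: "real b ^ 3 = real b * real b * real b" by (simp add: power3_eq_cube)
  show ?thesis unfolding main p2n Gs_eq Ds_eq rN0 ra X_def[symmetric] p3
    by (simp add: field_simps power2_eq_square)
qed

end
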